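(* Consider the faulty-starter delivery problem described in the context, with finisher starting position $(x,y)\neq(0,0)$, $y\ge0$. The hybrid algorithm $\mathcal{H}$ described in the context is optimal: for every online algorithm $\mathcal{A}$, $\mathrm{CR}_{\mathcal{H}}\le\mathrm{CR}_{\mathcal{A}}$.
   Context: Setting. In the plane let $S=(0,0)$ and $T=(1,0)$. A "starter" drone carrying a package starts at $S$ at time $0$ and moves at unit speed along $\overline{ST}$ towards $T$. At an unknown time $t\in[0,1]$ it fails and stays forever at $(t,0)$ with the package (at time $s$ the package is at $(\min\{s,t\},0)$). A "finisher" drone starts at time $0$ at $P=(x,y)$ with $y\ge0$, moves at unit speed and can stop and turn instantaneously. The package can be handed over only when the drones are co-located; it is delivered at the first time the finisher, carrying the package, is at $T$. An online algorithm $\mathcal{A}$ specifies the finisher's trajectory using only $(x,y)$ (not $t$); $A(t)$ is its delivery time for fail time $t$. $\mathrm{Opt}(t)=\max\{1,\sqrt{(x-t)^2+y^2}+1-t\}$ is the optimal offline delivery time. $\mathrm{CR}_{\mathcal{A}}(t)=A(t)/\mathrm{Opt}(t)$ and $\mathrm{CR}_{\mathcal{A}}=\sup_{0\le t\le1}\mathrm{CR}_{\mathcal{A}}(t)$. Candidate algorithms. $\mathcal{A}_0$: the finisher goes straight to $S$, then along $\overline{ST}$ towards $T$ until it finds the package, then on to $T$. $\mathcal{A}_1$: the finisher goes straight to $T$, then along the segment towards $S$ until it finds the package, then returns to $T$. $\mathcal{A}_d$ (for $x>0$): with $d=(x^2+y^2)/(2x)$, the finisher goes straight to $(d,0)$,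 then towards $S$ along the segment until it finds the package, then goes to $T$. Hybrid algorithm $\mathcal{H}$: if $(x-1)^2+y^2>1$, execute $\mathcal{A}_0$ if $\mathrm{CR}_{\mathcal{A}_0}\le\mathrm{CR}_{\mathcal{A}_1}$ and $\mathcal{A}_1$ otherwise; if $(x-1)^2+y^2\le1$, execute $\mathcal{A}_0$ if $\mathrm{CR}_{\mathcal{A}_0}\le\mathrm{CR}_{\mathcal{A}_d}$ and $\mathcal{A}_d$ otherwise. *)

theory Defs
  imports "HOL-Analysis.Analysis"
begin

definition S_pt :: "real \<times> real" where "S_pt = (0, 0)"
definition T_pt :: "real \<times> real" where "T_pt = (1, 0)"

text \<open>Position of the package at time s when the starter fails at time t.\<close>
definition pkg :: "real \<Rightarrow> real \<Rightarrow> real \<times> real" where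
  "pkg t s = (min s t, 0)"

definition admissible :: "real \<Rightarrow> real \<Rightarrow> (real \<Rightarrow> real \<times> real) \<Rightarrow> bool" where
  "admissible x y f \<longleftrightarrow> f 0 = (x, y) \<and>
     (\<forall>s1 s2. 0 \<le> s1 \<longrightarrow> 0 \<le> s2 \<longrightarrow> dist (f s1) (f s2) \<le> \<bar>s1 - s2\<bar>)"

text \<open>Delivery time of an online algorithm with pre-pickup trajectory f for fail time t:
  the package is picked up at a meeting time s, after which the finisher goes
  straight to T (which is optimal once the package is carried).  Infinite if
  the finisher never meets the package.\<close>
definition delivery :: "(real \<Rightarrow> real \<times> real) \<Rightarrow> real \<Rightarrow> ereal" where
  "delivery f t = Inf ((\<lambda>s. ereal (s + dist (f s) T_pt)) ` {s. 0 \<le> s \<and> f s = pkg t s})"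

definition Opt :: "real \<Rightarrow> real \<Rightarrow> real \<Rightarrow> real" where
  "Opt x y t = max 1 (sqrt ((x - t)\<^sup>2 + y\<^sup>2) + 1 - t)"

definition CR :: "real \<Rightarrow> real \<Rightarrow> (real \<Rightarrow> real \<times> real) \<Rightarrow> ereal" where
  "CR x y f = (SUP t\<in>{0..1}. delivery f t / ereal (Opt x y t))"

fun walk :: "(real \<times> real) list \<Rightarrow> real \<Rightarrow> real \<times> real" where
  "walk [] s = (0, 0)"
| "walk [p] s = p"
| "walk (p # q # ps) s =
     (if s \<le> dist p q then p + (s / dist p q) *\<^sub>R (q - p) else walk (q # ps) (s - dist p q))"

definition alg0 :: "real \<Rightarrow> real \<Rightarrow> real \<Rightarrow> real \<times> real" where
  "alg0 x y = walk [(x, y), S_pt, T_pt]"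

definition alg1 :: "real \<Rightarrow> real \<Rightarrow> real \<Rightarrow> real \<times> real" where
  "alg1 x y = walk [(x, y), T_pt, S_pt]"

definition dpar :: "real \<Rightarrow> real \<Rightarrow> real" where
  "dpar x y = (x\<^sup>2 + y\<^sup>2) / (2 * x)"

definition algd :: "real \<Rightarrow> real \<Rightarrow> real \<Rightarrow> real \<times> real" where
  "algd x y = walk [(x, y), (dpar x y, 0), S_pt]"

definition hybrid :: "real \<Rightarrow> real \<Rightarrow> real \<Rightarrow> real \<times> real" where
  "hybrid x y =
     (if (x - 1)\<^sup>2 + y\<^sup>2 > 1
      then (if CR x y (alg0 x y) \<le> CR x y (alg1 x y) then alg0 x y else alg1 x y)
      else (if CR x y (alg0 x y) \<le> CR x y (algd x y) then alg0 x y else algd x y))"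

end

theory Submission
  imports Defs
begin
definition DD :: "real \<Rightarrow> real \<Rightarrow> real \<Rightarrow> real" where "DD x y t = sqrt ((x-t)^2+y^2)"

lemma dist_P: "dist (x,y) (a::real,0::real) = DD x y a"
  by (simp add: dist_Pair_Pair dist_real_def DD_def)

lemma dist_ax: "dist (a::real,0::real) (b,0) = \<bar>a-b\<bar>"
  by (simp add: dist_Pair_Pair dist_real_def)

lemma delivery_lower:
  assumes "\<And>s. 0 \<le> s \<Longrightarrow> f s = pkg t s \<Longrightarrow> L \<le> s + dist (f s) T_pt"
  shows "ereal L \<le> delivery f t"
  unfolding delivery_def using assms by (auto intro!: Inf_greatest)

lemma delivery_upper:
  assumes "0 \<le> s" "f s = pkg t s"
  shows "delivery f t \<le> ereal (s + dist (f s) T_pt)"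
  unfolding delivery_def using assms by (auto intro!: Inf_lower)

lemma Opt_ge1: "Opt x y t \<ge> 1" by (simp add: Opt_def)

lemma CR_lower:
  assumes "0 \<le> t" "t \<le> 1" "ereal L \<le> delivery f t"
  shows "ereal (L / Opt x y t) \<le> CR x y f"
proof -
  have O: "Opt x y t > 0" using Opt_ge1[of x y t] by linarith
  have "ereal (L / Opt x y t) = ereal L / ereal (Opt x y t)" using O by simp
  also have "\<dots> \<le> delivery f t / ereal (Opt x y t)"
    using assms(3) O by (intro ereal_divide_right_mono) auto
  also have "\<dots> \<le> CR x y f" unfolding CR_def using assms(1,2) by (intro SUP_upper) auto
  finally show ?thesis .
qed

lemma CR_upper:
  assumes "\<And>t. 0 \<le> t \<Longrightarrow> t \<le> 1 \<Longrightarrow> delivery g t \<le> ereal (v t)"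
    and "\<And>t. 0 \<le> t \<Longrightarrow> t \<le> 1 \<Longrightarrow> ereal (v t / Opt x y t) \<le> B"
  shows "CR x y g \<le> B"
  unfolding CR_def
proof (rule SUP_least)
  fix t assume "t \<in> {0..(1::real)}"
  hence t: "0 \<le> t" "t \<le> 1" by auto
  have O: "Opt x y t > 0" using Opt_ge1[of x y t] by linarith
  have "delivery g t / ereal (Opt x y t) \<le> ereal (v t) / ereal (Opt x y t)"
    using assms(1)[OF t] O by (intro ereal_divide_right_mono) auto
  also have "\<dots> = ereal (v t / Opt x y t)" using O by simp
  also have "\<dots> \<le> B" using assms(2)[OF t] .
  finally show "delivery g t / ereal (Opt x y t) \<le> B" .
qed

lemma adm_meet:
  assumes "admissible x y f" "0 \<le> s" "f s = (a,0)"
  shows "DD x y a \<le> s"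
proof -
  have "dist (f 0) (f s) \<le> \<bar>0 - s\<bar>" using assms(1,2) unfolding admissible_def by auto
  thus ?thesis using assms by (simp add: admissible_def dist_P)
qed

lemma adm_two:
  assumes "admissible x y f" "0 \<le> s1" "0 \<le> s2" "f s1 = (a,0)" "f s2 = (b,0)"
  shows "\<bar>a - b\<bar> \<le> \<bar>s1 - s2\<bar>"
proof -
  have "dist (f s1) (f s2) \<le> \<bar>s1 - s2\<bar>" using assms(1,2,3) unfolding admissible_def by auto
  thus ?thesis using assms by (simp add: dist_ax)
qed

lemma DD_tri: "DD x y a \<le> DD x y b + \<bar>a - b\<bar>"
proof -
  have "dist (x,y) (a,0::real) \<le> dist (x,y) (b,0::real) + dist (b,0::real) (a,0)" by (rule dist_triangle)
  thus ?thesis unfolding dist_ax by (simp only: dist_P abs_minus_commute)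
qed

lemma delivery_ge1: "ereal 1 \<le> delivery f t"
proof (rule delivery_lower)
  fix s assume "0 \<le> s" "f s = pkg t s"
  hence "f s = (min s t, 0)" by (simp add: pkg_def)
  hence "dist (f s) T_pt = \<bar>min s t - 1\<bar>" by (simp add: T_pt_def dist_ax)
  thus "1 \<le> s + dist (f s) T_pt" by linarith
qed


lemma DD_nonneg: "DD x y a \<ge> 0" by (simp add: DD_def)

lemma DD_sq: "(DD x y a)^2 = (x-a)^2+y^2" by (simp add: DD_def)

lemma r0_pos: assumes "(x,y) \<noteq> (0,0)" shows "DD x y 0 > 0"
proof -
  have "x^2+y^2 > 0" using assms by (auto simp: sum_power2_gt_zero_iff)
  thus ?thesis by (simp add: DD_def)
qed

lemma pkg0: "0 \<le> s \<Longrightarrow> pkg 0 s = (0,0)" by (simp add: pkg_def)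

lemma A0_deliv:
  assumes "(x,y) \<noteq> (0,0)" "0 \<le> t" "t \<le> 1"
  shows "delivery (alg0 x y) t \<le> ereal (1 + DD x y 0)"
proof -
  define r0 where "r0 = DD x y 0"
  have r0: "r0 > 0" using r0_pos[OF assms(1)] by (simp add: r0_def)
  have dPS: "dist (x,y) S_pt = r0" by (simp add: S_pt_def r0_def dist_P)
  have dST: "dist S_pt T_pt = 1" by (simp add: S_pt_def T_pt_def dist_ax)
  have pos: "alg0 x y (r0 + t) = (t,0)"
  proof (cases "t = 0")
    case True
    thus ?thesis using r0 dPS by (simp add: alg0_def S_pt_def)
  next
    case False
    hence "t > 0" using assms by simp
    thus ?thesis using r0 dPS dST assms by (simp add: alg0_def S_pt_def T_pt_def)
  qed
  have pk: "pkg t (r0 + t) = (t,0)" using r0 by (simp add: pkg_def)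
  have "delivery (alg0 x y) t \<le> ereal ((r0 + t) + dist (alg0 x y (r0 + t)) T_pt)"
    using pos pk r0 assms by (intro delivery_upper) auto
  also have "\<dots> = ereal (1 + r0)" using pos assms by (simp add: T_pt_def dist_ax)
  finally show ?thesis by (simp add: r0_def)
qed

lemma A1_deliv:
  assumes "DD x y 1 > 1" "0 \<le> t" "t \<le> 1"
  shows "delivery (alg1 x y) t \<le> ereal (2 + DD x y 1 - 2*t)"
proof -
  define r1 where "r1 = DD x y 1"
  have r1: "r1 > 1" using assms by (simp add: r1_def)
  have dPT: "dist (x,y) T_pt = r1" by (simp add: T_pt_def r1_def dist_P)
  have dST: "dist T_pt S_pt = 1" by (simp add: S_pt_def T_pt_def dist_ax)
  have pos: "alg1 x y (r1 + 1 - t) = (if t = 1 then (1,0) else (t,0))"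
  proof (cases "t = 1")
    case True
    thus ?thesis using r1 dPT by (simp add: alg1_def T_pt_def)
  next
    case False
    hence "t < 1" using assms by simp
    thus ?thesis using r1 dPT dST assms by (simp add: alg1_def S_pt_def T_pt_def)
  qed
  have pk: "pkg t (r1 + 1 - t) = (if t = 1 then (1,0) else (t,0))" using r1 assms by (simp add: pkg_def)
  have "delivery (alg1 x y) t \<le> ereal ((r1 + 1 - t) + dist (alg1 x y (r1 + 1 - t)) T_pt)"
    using pos pk r1 assms by (intro delivery_upper) auto
  also have "\<dots> = ereal (2 + r1 - 2*t)" using pos assms by (simp add: T_pt_def dist_ax)
  finally show ?thesis by (simp add: r1_def)
qed

lemma dpar_props:
  assumes "x > 0" "(x-1)^2+y^2 \<le> 1"
  shows "dpar x y > 0 \<or> (x,y) = (0,0)" "dpar x y \<le> 1" "2*x*dpar x y = x^2+y^2"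
proof -
  show "2*x*dpar x y = x^2+y^2" using assms by (simp add: dpar_def)
  have "x^2+y^2 \<le> 2*x" using assms by (simp add: power2_eq_square algebra_simps)
  thus "dpar x y \<le> 1" using assms by (simp add: dpar_def divide_le_eq)
  have "x^2 > 0" using assms by simp
  hence "x^2+y^2 > 0" by (smt (verit) zero_le_power2)
  thus "dpar x y > 0 \<or> (x,y) = (0,0)" using assms by (simp add: dpar_def)
qed

lemma Ad_deliv:
  assumes "x > 0" "(x-1)^2+y^2 \<le> 1" "0 \<le> t" "t \<le> 1"
  shows "delivery (algd x y) t \<le> ereal (if t < dpar x y then 2 * dpar x y + 1 - 2*t else 1)"
proof -
  define d where "d = dpar x y"
  have d: "d > 0" "d \<le> 1" "2*x*d = x^2+y^2" using dpar_props[OF assms(1,2)] assms(1) by (auto simp: d_def)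
  have "(x-d)^2+y^2 = d^2" using d(3) by (simp add: power2_eq_square algebra_simps)
  hence dPD: "dist (x,y) (d,0) = d" using d by (simp add: dist_P DD_def)
  have dDS: "dist (d,0) S_pt = d" using d by (simp add: S_pt_def dist_ax)
  show ?thesis
  proof (cases "t < d")
    case True
    have pos: "algd x y (2*d - t) = (t,0)"
      using True d dPD dDS assms by (simp add: algd_def d_def[symmetric] S_pt_def field_simps)
    have pk: "pkg t (2*d - t) = (t,0)" using True by (simp add: pkg_def)
    have "delivery (algd x y) t \<le> ereal ((2*d - t) + dist (algd x y (2*d - t)) T_pt)"
      using pos pk True assms by (intro delivery_upper) auto
    also have "\<dots> = ereal (2*d + 1 - 2*t)" using pos assms by (simp add: T_pt_def dist_ax)
    finally show ?thesis using True by (simp add: d_def)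
  next
    case False
    have pos: "algd x y d = (d,0)"
      using d dPD assms by (simp add: algd_def d_def[symmetric])
    have pk: "pkg t d = (d,0)" using False by (simp add: pkg_def)
    have "delivery (algd x y) t \<le> ereal (d + dist (algd x y d) T_pt)"
      using pos pk d by (intro delivery_upper) auto
    also have "\<dots> = ereal 1" using pos d by (simp add: T_pt_def dist_ax)
    finally show ?thesis using False by (simp add: d_def)
  qed
qed




lemma in_facts:
  assumes "x > 0" "(x-1)^2+y^2 \<le> 1"
  shows "\<And>a. DD x y a \<le> a \<Longrightarrow> dpar x y \<le> a"
    and "\<And>a. a < dpar x y \<Longrightarrow> a < DD x y a"
proof -
  have d: "2*x*dpar x y = x^2+y^2" using dpar_props[OF assms] by simp
  fix a
  {
    assume "DD x y a \<le> a"
    hence "(DD x y a)^2 \<le> a^2" using DD_nonneg by (simp add: power_mono)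
    hence "(x-a)^2+y^2 \<le> a^2" by (simp add: DD_sq)
    hence "2*x*dpar x y \<le> 2*x*a" using d by (simp add: power2_eq_square algebra_simps)
    thus "dpar x y \<le> a" using assms(1) by simp
  }
  {
    assume a: "a < dpar x y"
    show "a < DD x y a"
    proof (rule ccontr)
      assume "\<not> a < DD x y a"
      hence "DD x y a \<le> a" by simp
      hence "(DD x y a)^2 \<le> a^2" using DD_nonneg by (simp add: power_mono)
      hence "(x-a)^2+y^2 \<le> a^2" by (simp add: DD_sq)
      hence "2*x*dpar x y \<le> 2*x*a" using d by (simp add: power2_eq_square algebra_simps)
      thus False using assms(1) a by simp
    qed
  }
qed

lemma quad_nonneg: "7*a^2 - t*a + t^2 \<ge> (0::real)"
proof -
  have "7*a^2 - t*a + t^2 = (t - a/2)^2 + 27/4*a^2" by (simp add: power2_eq_square algebra_simps)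
  also have "\<dots> \<ge> 0" by simp
  finally show ?thesis .
qed

lemma polyG:
  fixes t a w b :: real
  assumes "t + a + b = 1" "0 \<le> t" "0 \<le> a" "0 \<le> w" "0 \<le> b"
  shows "((t+w+a+b)+2*(a+b))^2*((t+2*a+w)^2 + (a+b)*t - t*(t+w+a+b)^2)
     \<le> (a+b)*(((t+2*a+w)+(a+b))*((t+2*a+w)+(a+b)+2) - ((t+w+a+b)+2*(a+b)))^2"
proof -
  have id: "(a+b)*(((t+2*a+w)+(a+b))*((t+2*a+w)+(a+b)+2) - ((t+w+a+b)+2*(a+b)))^2
     - ((t+w+a+b)+2*(a+b))^2*((t+2*a+w)^2 + (a+b)*t - t*(t+w+a+b)^2)
   = (12*a*w*b^3 + 16*a*w^2*b^2 + 4*a*w^3*b + 100*a^2*w*b^2 + 52*a^2*w^2*b + 4*a^2*w^3 + 148*a^3*b^2 + 196*a^3*w*b + 36*a^3*w^2 + 228*a^4*b + 108*a^4*w + 108*a^5 + 12*t*w*b^3 + 16*t*w^2*b^2 + 4*t*w^3*b + 64*t*a*w*b^2 + 36*t*a*w^2*b + 72*t*a^2*b^2 + 148*t*a^2*w*b + 16*t*a^2*w^2 + 220*t*a^3*b + 96*t*a^3*w + 144*t*a^4 + 24*t^2*w*b^2 + 12*t^2*w^2*b + 16*t^2*a*b^2 + 52*t^2*a*w*b + 72*t^2*a^2*b + 20*t^2*a^2*w + 60*t^2*a^3 + 8*t^3*b^2 + 12*t^3*w*b + 20*t^3*a*b + 8*t^3*a^2 + 4*t^4*b) + 4*b^3*(7*a^2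 - t*a + t^2)"
  proof -
    have t: "t = 1 - a - b" using assms by simp
    show ?thesis unfolding t by (simp add: algebra_simps eval_nat_numeral)
  qed
  have S: "0 \<le> 12*a*w*b^3 + 16*a*w^2*b^2 + 4*a*w^3*b + 100*a^2*w*b^2 + 52*a^2*w^2*b + 4*a^2*w^3 + 148*a^3*b^2 + 196*a^3*w*b + 36*a^3*w^2 + 228*a^4*b + 108*a^4*w + 108*a^5 + 12*t*w*b^3 + 16*t*w^2*b^2 + 4*t*w^3*b + 64*t*a*w*b^2 + 36*t*a*w^2*b + 72*t*a^2*b^2 + 148*t*a^2*w*b + 16*t*a^2*w^2 + 220*t*a^3*b + 96*t*a^3*w + 144*t*a^4 + 24*t^2*w*b^2 + 12*t^2*w^2*b + 16*t^2*a*b^2 + 52*t^2*a*w*b + 72*t^2*a^2*b + 20*t^2*a^2*w + 60*t^2*a^3 + 8*t^3*b^2 + 12*t^3*w*b + 20*t^3*a*b + 8*t^3*a^2 + 4*t^4*b"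
    using assms(2-5) by (intro add_nonneg_nonneg mult_nonneg_nonneg zero_le_power) simp_all
  have Q: "0 \<le> 4*b^3*(7*a^2 - t*a + t^2)"
    using assms(5) quad_nonneg[of a t] by (intro mult_nonneg_nonneg zero_le_power) simp_all
  show ?thesis using id S Q by linarith
qed

lemma polyH:
  fixes t K J n :: real
  assumes "t + K + J + n = 1" "0 \<le> t" "0 \<le> K" "0 \<le> J" "0 \<le> n"
  shows "(2*(t+K+J)+1-2*t)^2*(t+K+J)*((t+2*K)^2-t^2)
     \<le> (K+J)*((t+2*K+1-t)*(t+2*K+3-t) - (2*(t+K+J)+1-2*t))^2"
proof -
  have id: "(K+J)*((t+2*K+1-t)*(t+2*K+3-t) - (2*(t+K+J)+1-2*t))^2
     - (2*(t+K+J)+1-2*t)^2*(t+K+J)*((t+2*K)^2-t^2)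
   = (4*J*n^4 + 8*J^2*n^3 + 4*J^3*n^2 + 4*K*n^4 + 48*K*J*n^3 + 76*K*J^2*n^2 + 32*K*J^3*n + 40*K^2*n^3 + 216*K^2*J*n^2 + 216*K^2*J^2*n + 144*K^3*n^2 + 400*K^3*J*n + 148*K^3*J^2 + 216*K^4*n + 228*K^4*J + 108*K^5 + 16*t*J*n^3 + 24*t*J^2*n^2 + 8*t*J^3*n + 16*t*K*n^3 + 140*t*K*J*n^2 + 128*t*K*J^2*n + 112*t*K^2*n^2 + 360*t*K^2*J*n + 72*t*K^2*J^2 + 240*t*K^3*n + 220*t*K^3*J + 144*t*K^4 + 24*t^2*J*n^2 + 24*t^2*J^2*n + 20*t^2*K*n^2 + 112*t^2*K*J*n + 16*t^2*K*J^2 + 80*t^2*K^2*n + 72*t^2*K^2*J + 60*t^2*K^3 + 16*t^3*J*n + 8*t^3*J^2 + 8*t^3*K*n + 20*t^3*K*J + 8*t^3*K^2 + 4*t^4*J) + 4*J^3*(7*K^2 - t*K + t^2)"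
  proof -
    have n: "n = 1 - t - K - J" using assms by simp
    show ?thesis unfolding n by (simp add: algebra_simps eval_nat_numeral)
  qed
  have S: "0 \<le> 4*J*n^4 + 8*J^2*n^3 + 4*J^3*n^2 + 4*K*n^4 + 48*K*J*n^3 + 76*K*J^2*n^2 + 32*K*J^3*n + 40*K^2*n^3 + 216*K^2*J*n^2 + 216*K^2*J^2*n + 144*K^3*n^2 + 400*K^3*J*n + 148*K^3*J^2 + 216*K^4*n + 228*K^4*J + 108*K^5 + 16*t*J*n^3 + 24*t*J^2*n^2 + 8*t*J^3*n + 16*t*K*n^3 + 140*t*K*J*n^2 + 128*t*K*J^2*n + 112*t*K^2*n^2 + 360*t*K^2*J*n + 72*t*K^2*J^2 + 240*t*K^3*n + 220*t*K^3*J + 144*t*K^4 + 24*t^2*J*n^2 + 24*t^2*J^2*n + 20*t^2*K*n^2 + 112*t^2*K*J*n + 16*t^2*K*J^2 + 80*t^2*K^2*n + 72*t^2*K^2*J + 60*t^2*K^3 + 16*t^3*J*n + 8*t^3*J^2 + 8*t^3*K*n + 20*t^3*K*J + 8*t^3*K^2 + 4*t^4*J"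
    using assms(2-5) by (intro add_nonneg_nonneg mult_nonneg_nonneg zero_le_power) simp_all
  have Q: "0 \<le> 4*J^3*(7*K^2 - t*K + t^2)"
    using assms(4) quad_nonneg[of K t] by (intro mult_nonneg_nonneg zero_le_power) simp_all
  show ?thesis using id S Q by linarith
qed

lemma I1:
  assumes "y \<ge> 0" "0 \<le> t" "t \<le> 1" "DD x y 1 > 1"
  shows "(2 + DD x y 1 - 2*t) * (1 + DD x y 0) \<le> (DD x y t + 1 - t) * (DD x y t + 3 - t)"
proof -
  define p where "p = DD x y t"
  define r0 where "r0 = DD x y 0"
  define r1 where "r1 = DD x y 1"
  define q where "q = 1 - t"
  have r1: "r1 > 1" using assms by (simp add: r1_def)
  have tri1: "r1 \<le> p + q" using DD_tri[of x y 1 t] assms by (simp add: r1_def p_def q_def)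
  have tri2: "p \<le> r1 + q" using DD_tri[of x y t 1] assms by (simp add: r1_def p_def q_def)
  have tri0: "r0 \<le> r1 + 1" using DD_tri[of x y 0 1] by (simp add: r1_def r0_def)
  have r0nn: "r0 \<ge> 0" by (simp add: r0_def DD_nonneg)
  have pnn: "p \<ge> 0" by (simp add: p_def DD_nonneg)
  show ?thesis
  proof (cases "t = 1")
    case True
    hence "p = r1" by (simp add: p_def r1_def)
    hence "(2 + r1 - 2*t) * (1 + r0) \<le> (p + 1 - t) * (p + 3 - t)"
      using True tri0 r1 by (simp add: mult_left_mono)
    thus ?thesis by (simp add: p_def r0_def r1_def)
  next
    case False
    hence q: "q > 0" using assms by (simp add: q_def)
    have sqs: "r0^2 = x^2+y^2" "r1^2 = (x-1)^2+y^2" "p^2 = (x-t)^2+y^2"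
      by (simp_all add: r0_def r1_def p_def DD_sq)
    have stew: "q * r0^2 + t * r1^2 = p^2 + q*t"
      unfolding sqs by (simp add: q_def power2_eq_square algebra_simps)
    define a where "a = (p + q - r1)/2"
    define b where "b = (r1 + q - p)/2"
    define w where "w = r1 - 1"
    have P: "((t+w+a+b)+2*(a+b))^2*((t+2*a+w)^2 + (a+b)*t - t*(t+w+a+b)^2)
     \<le> (a+b)*(((t+2*a+w)+(a+b))*((t+2*a+w)+(a+b)+2) - ((t+w+a+b)+2*(a+b)))^2"
    proof (rule polyG)
      show "t + a + b = 1" unfolding a_def b_def q_def by (simp add: field_simps)
      show "0 \<le> t" using assms by simp
      show "0 \<le> a" using tri1 unfolding a_def by simp
      show "0 \<le> w" using r1 unfolding w_def by linarith
      show "0 \<le> b" using tri2 unfolding b_def by simp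
    qed
    have e1: "t+w+a+b = r1" "a+b = q" "t+2*a+w = p"
      unfolding a_def b_def w_def q_def by (simp_all add: field_simps)
    define V where "V = (p+q)*(p+q+2) - (r1+2*q)"
    have P2: "(r1+2*q)^2*(p^2 + q*t - t*r1^2) \<le> q*V^2"
      using P unfolding e1 V_def .
    have qr0: "q*r0^2 = p^2 + q*t - t*r1^2" using stew by linarith
    have "(r1+2*q)^2*(q*r0^2) \<le> q*V^2" unfolding qr0 using P2 .
    hence "q*((r1+2*q)^2*r0^2) \<le> q*V^2" by (simp add: algebra_simps)
    hence "(r1+2*q)^2*r0^2 \<le> V^2" using q by simp
    hence sq: "((r1+2*q)*r0)^2 \<le> V^2" by (simp add: power_mult_distrib)
    have m1: "(p+q)*(p+q+2) \<ge> r1*(r1+2)" using tri1 r1 by (intro mult_mono) auto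
    have m2: "(r1 - 1)*(r1+2) \<ge> 0" using r1 by (intro mult_nonneg_nonneg) auto
    have m3: "r1*(r1+2) - (r1+2) = (r1 - 1)*(r1+2)" by (simp add: algebra_simps)
    have m4: "r1*(r1+2) - (r1+2) \<ge> 0" using m2 m3 by simp
    have qle: "q \<le> 1" using assms by (simp add: q_def)
    have Vnn: "V \<ge> 0"
    proof -
      define X where "X = (p+q)*(p+q+2)"
      define Y where "Y = r1*(r1+2)"
      have "X \<ge> Y" "Y - (r1+2) \<ge> 0" using m1 m4 by (simp_all add: X_def Y_def)
      moreover have "V = X - (r1+2*q)" by (simp add: V_def X_def)
      ultimately show ?thesis using qle by linarith
    qed
    have "(r1+2*q)*r0 \<le> V" using power2_le_imp_le[OF sq Vnn] .
    hence "(r1+2*q)*(1+r0) \<le> (p+q)*(p+q+2)" by (simp add: V_def algebra_simps)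
    thus ?thesis by (simp add: p_def r0_def r1_def q_def algebra_simps)
  qed
qed

lemma I2:
  assumes "y \<ge> 0" "0 \<le> t" "t < dpar x y" "x > 0" "(x-1)^2+y^2 \<le> 1"
  shows "(2 * dpar x y + 1 - 2*t) * (1 + DD x y 0) \<le> (DD x y t + 1 - t) * (DD x y t + 3 - t)"
proof -
  define d where "d = dpar x y"
  define p where "p = DD x y t"
  define r0 where "r0 = DD x y 0"
  have d: "d \<le> 1" "2*x*d = x^2+y^2" using dpar_props[OF assms(4,5)] by (auto simp: d_def)
  have td: "t < d" using assms by (simp add: d_def)
  have pt: "t < p" using in_facts(2)[OF assms(4,5) assms(3)] by (simp add: p_def)
  have r0nn: "r0 \<ge> 0" by (simp add: r0_def DD_nonneg)
  have pnn: "p \<ge> 0" by (simp add: p_def DD_nonneg)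
  have r0sq: "r0^2 = 2*x*d" using d by (simp add: r0_def DD_sq)
  have psq0: "p^2 = (x-t)^2+y^2" by (simp add: p_def DD_sq)
  have ex1: "(x-t)^2 = x^2 - 2*x*t + t^2" by (simp add: power2_eq_square algebra_simps)
  have ex2: "2*x*(d-t) = 2*x*d - 2*x*t" by (simp add: algebra_simps)
  have psq: "p^2 = 2*x*(d-t) + t^2" using psq0 ex1 ex2 d(2) by linarith
  have y2: "y^2 \<ge> 0" by simp
  have ex3: "x*(2*d) = 2*x*d" "x*x = x^2" by (simp_all add: power2_eq_square)
  have "x*x \<le> x*(2*d)" using d(2) y2 ex3 by linarith
  hence x2d: "x \<le> 2*d" using assms(4) by (simp add: mult_le_cancel_left_pos)
  have "p^2 \<le> (2*d - t)^2"
  proof -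
    have h1: "2*x*(d-t) \<le> 2*(2*d)*(d-t)" by (rule mult_right_mono) (use x2d td in auto)
    have h2: "(2*d - t)^2 = 2*(2*d)*(d-t) + t^2" by (simp add: power2_eq_square algebra_simps)
    show ?thesis unfolding h2 psq using h1 by linarith
  qed
  hence p2d: "p \<le> 2*d - t" by (rule power2_le_imp_le) (use td assms(2) in auto)
  define K where "K = (p - t)/2"
  define J where "J = (2*d - t - p)/2"
  define n where "n = 1 - d"
  have P: "(2*(t+K+J)+1-2*t)^2*(t+K+J)*((t+2*K)^2-t^2)
     \<le> (K+J)*((t+2*K+1-t)*(t+2*K+3-t) - (2*(t+K+J)+1-2*t))^2"
  proof (rule polyH)
    show "t + K + J + n = 1" unfolding K_def J_def n_def by (simp add: field_simps)
    show "0 \<le> t" using assms by simp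
    show "0 \<le> K" using pt unfolding K_def by simp
    show "0 \<le> J" using p2d unfolding J_def by simp
    show "0 \<le> n" using d unfolding n_def by linarith
  qed
  have e1: "t+K+J = d" "K+J = d - t" "t+2*K = p" unfolding K_def J_def by (simp_all add: field_simps)
  define A where "A = 2*d+1-2*t"
  define W where "W = (p+1-t)*(p+3-t)"
  have P2: "A^2*d*(p^2-t^2) \<le> (d-t)*(W - A)^2" using P unfolding e1 A_def W_def .
  have "r0^2*(d-t) = d*(p^2-t^2)" unfolding r0sq psq by (simp add: algebra_simps)
  note E0 = this
  have "(d-t)*(A^2*r0^2) = A^2*(r0^2*(d-t))" by (simp add: algebra_simps)
  also have "\<dots> = A^2*d*(p^2-t^2)" using E0 by simp
  also have "\<dots> \<le> (d-t)*(W-A)^2" using P2 .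
  finally have "(d-t)*(A^2*r0^2) \<le> (d-t)*(W-A)^2" .
  hence "A^2*r0^2 \<le> (W-A)^2" using td by simp
  hence sq: "(A*r0)^2 \<le> (W-A)^2" by (simp add: power_mult_distrib)
  have "1*3 \<le> (p+1-t)*(p+3-t)" by (rule mult_mono) (use pt in auto)
  hence W3: "W \<ge> 3" unfolding W_def by simp
  have A3: "A \<le> 3" using d(1) assms(2) unfolding A_def by linarith
  have "A*r0 \<le> W - A" using power2_le_imp_le[OF sq] W3 A3 by simp
  hence "A*(1+r0) \<le> W" by (simp add: algebra_simps)
  thus ?thesis by (simp add: A_def W_def d_def p_def r0_def)
qed



lemma Opt_mono1: "0 \<le> t \<Longrightarrow> t \<le> 1 \<Longrightarrow> Opt x y 1 \<le> Opt x y t"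
proof -
  assume t: "0 \<le> t" "t \<le> 1"
  have "DD x y 1 \<le> DD x y t + \<bar>1 - t\<bar>" by (rule DD_tri)
  thus ?thesis using t by (simp add: Opt_def DD_def)
qed

lemma case1:
  assumes adm: "admissible x y f" and nz: "(x,y) \<noteq> (0,0)"
    and s0: "0 \<le> s0" "f s0 = (0,0)"
    and first: "\<forall>s1. 0 \<le> s1 \<longrightarrow> f s1 = pkg 1 s1 \<longrightarrow> s0 \<le> s1"
  shows "CR x y (alg0 x y) \<le> CR x y f"
proof -
  define r0 where "r0 = DD x y 0"
  have r0: "r0 > 0" using r0_pos[OF nz] by (simp add: r0_def)
  have s0r: "r0 \<le> s0" using adm_meet[OF adm s0] by (simp add: r0_def)
  have del: "ereal (1 + r0) \<le> delivery f 1"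
  proof (rule delivery_lower)
    fix s assume s: "0 \<le> s" "f s = pkg 1 s"
    hence fs: "f s = (min s 1, 0)" by (simp add: pkg_def)
    have le: "s0 \<le> s" using first s by auto
    have "\<bar>min s 1 - 0\<bar> \<le> \<bar>s - s0\<bar>" using adm_two[OF adm s(1) s0(1) fs s0(2)] .
    hence "s \<ge> 1" "s \<ge> 1 + s0" using le s0r r0 by (auto simp: min_def split: if_splits)
    thus "1 + r0 \<le> s + dist (f s) T_pt" using fs s0r by (simp add: T_pt_def dist_ax)
  qed
  have key: "ereal ((1 + r0) / Opt x y 1) \<le> CR x y f" using CR_lower[OF _ _ del] by simp
  show ?thesis
  proof (rule CR_upper[where v = "\<lambda>t. 1 + r0"])
    fix t :: real assume t: "0 \<le> t" "t \<le> 1"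
    show "delivery (alg0 x y) t \<le> ereal (1 + r0)" using A0_deliv[OF nz t] by (simp add: r0_def)
    have "(1 + r0) / Opt x y t \<le> (1 + r0) / Opt x y 1"
      using Opt_mono1[OF t, of x y] Opt_ge1[of x y 1] r0 by (intro divide_left_mono) auto
    thus "ereal ((1 + r0) / Opt x y t) \<le> CR x y f" using key by (meson ereal_less_eq(3) order_trans)
  qed
qed


lemma out_meet:
  assumes adm: "admissible x y f" and out: "DD x y 1 > 1" and t: "0 \<le> t" "t \<le> 1"
    and s: "0 \<le> s" "f s = pkg t s"
  shows "f s = (t,0)" "s \<ge> DD x y t"
proof -
  have "\<not> s < t"
  proof
    assume st: "s < t"
    hence fs: "f s = (s,0)" using s by (simp add: pkg_def)
    have "DD x y s \<le> s" using adm_meet[OF adm s(1) fs] .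
    moreover have "DD x y 1 \<le> DD x y s + \<bar>1 - s\<bar>" by (rule DD_tri)
    ultimately show False using out st t by auto
  qed
  thus fs: "f s = (t,0)" using s by (simp add: pkg_def)
  show "s \<ge> DD x y t" using adm_meet[OF adm s(1) fs] .
qed

lemma case2_out:
  assumes adm: "admissible x y f" and y: "y \<ge> 0" and out: "DD x y 1 > 1"
    and C2: "\<forall>s0. 0 \<le> s0 \<longrightarrow> f s0 = (0,0) \<longrightarrow> (\<exists>s1. 0 \<le> s1 \<and> f s1 = pkg 1 s1 \<and> s1 < s0)"
  shows "CR x y (alg1 x y) \<le> CR x y f"
proof (rule CR_upper[where v = "\<lambda>t. 2 + DD x y 1 - 2*t"])
  fix t :: real assume t: "0 \<le> t" "t \<le> 1"
  show "delivery (alg1 x y) t \<le> ereal (2 + DD x y 1 - 2*t)" using A1_deliv[OF out t] .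
  define E where "E = DD x y t + 1 - t"
  have E1: "E \<ge> DD x y 1" using DD_tri[of x y 1 t] t by (simp add: E_def)
  have "Opt x y t = max 1 E" by (simp add: Opt_def E_def DD_def)
  hence OptE: "Opt x y t = E" using E1 out by simp
  have Opt0: "Opt x y 0 = 1 + DD x y 0" by (simp add: Opt_def DD_def)
  have r0nn: "DD x y 0 \<ge> 0" by (rule DD_nonneg)
  show "ereal ((2 + DD x y 1 - 2*t) / Opt x y t) \<le> CR x y f"
  proof (cases "\<exists>s. 0 \<le> s \<and> f s = pkg t s \<and> (\<forall>s1. 0 \<le> s1 \<longrightarrow> f s1 = pkg 1 s1 \<longrightarrow> s \<le> s1)")
    case True
    then obtain s where s: "0 \<le> s" "f s = pkg t s" and sfirst: "\<forall>s1. 0 \<le> s1 \<longrightarrow> f s1 = pkg 1 s1 \<longrightarrow> s \<le> s1"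
      by blast
    have fs: "f s = (t,0)" and sD: "s \<ge> DD x y t" using out_meet[OF adm out t s] by auto
    have del: "ereal (E + 2) \<le> delivery f 0"
    proof (rule delivery_lower)
      fix s0 assume s0: "0 \<le> s0" "f s0 = pkg 0 s0"
      hence fs0: "f s0 = (0,0)" by (simp add: pkg_def)
      obtain s1 where s1: "0 \<le> s1" "f s1 = pkg 1 s1" "s1 < s0" using C2 s0(1) fs0 by blast
      have fs1: "f s1 = (1,0)" using out_meet[OF adm out _ _ s1(1,2)] by simp
      have ss1: "s \<le> s1" using sfirst s1 by auto
      have a: "\<bar>1 - t\<bar> \<le> \<bar>s1 - s\<bar>" using adm_two[OF adm s1(1) s(1) fs1 fs] .
      have b: "\<bar>0 - 1\<bar> \<le> \<bar>s0 - s1\<bar>" using adm_two[OF adm s0(1) s1(1) fs0 fs1] .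
      show "E + 2 \<le> s0 + dist (f s0) T_pt" using a b ss1 s1 sD t fs0
        by (simp add: T_pt_def dist_ax E_def)
    qed
    have c: "ereal ((E + 2) / Opt x y 0) \<le> CR x y f" using CR_lower[OF _ _ del] by simp
    have Epos: "E > 0" using E1 out by linarith
    have "(2 + DD x y 1 - 2*t) * (1 + DD x y 0) \<le> E * (E + 2)"
      using I1[OF y t out] by (simp add: E_def algebra_simps)
    hence "(2 + DD x y 1 - 2*t) / E \<le> (E + 2) / (1 + DD x y 0)"
      using Epos r0nn by (simp add: divide_simps mult.commute)
    thus ?thesis using c OptE Opt0 by (metis ereal_less_eq(3) order_trans)
  next
    case False
    have del: "ereal (2 + DD x y 1 - 2*t) \<le> delivery f t"
    proof (rule delivery_lower)
      fix s assume s: "0 \<le> s" "f s = pkg t s"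
      have fs: "f s = (t,0)" using out_meet[OF adm out t s] by auto
      obtain s1 where s1: "0 \<le> s1" "f s1 = pkg 1 s1" "s1 < s" using False s by force
      have fs1: "f s1 = (1,0)" and s1D: "s1 \<ge> DD x y 1" using out_meet[OF adm out _ _ s1(1,2)] by auto
      have a: "\<bar>t - 1\<bar> \<le> \<bar>s - s1\<bar>" using adm_two[OF adm s(1) s1(1) fs fs1] .
      show "2 + DD x y 1 - 2*t \<le> s + dist (f s) T_pt" using a s1 s1D t fs
        by (simp add: T_pt_def dist_ax)
    qed
    show ?thesis using CR_lower[OF t del] .
  qed
qed


lemma case2_in:
  assumes adm: "admissible x y f" and y: "y \<ge> 0" and xpos: "x > 0" and inside: "(x-1)^2+y^2 \<le> 1"
    and C2: "\<forall>s0. 0 \<le> s0 \<longrightarrow> f s0 = (0,0) \<longrightarrow> (\<exists>s1. 0 \<le> s1 \<and> f s1 = pkg 1 s1 \<and> s1 < s0)"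
  shows "CR x y (algd x y) \<le> CR x y f"
proof (rule CR_upper[where v = "\<lambda>t. if t < dpar x y then 2 * dpar x y + 1 - 2*t else 1"])
  fix t :: real assume t: "0 \<le> t" "t \<le> 1"
  show "delivery (algd x y) t \<le> ereal (if t < dpar x y then 2 * dpar x y + 1 - 2*t else 1)"
    using Ad_deliv[OF xpos inside t] .
  define d where "d = dpar x y"
  have d: "d > 0" "d \<le> 1" using dpar_props[OF xpos inside] xpos by (auto simp: d_def)
  have F1: "\<And>a. DD x y a \<le> a \<Longrightarrow> d \<le> a" and F2: "\<And>a. a < d \<Longrightarrow> a < DD x y a"
    using in_facts[OF xpos inside] by (auto simp: d_def)
  show "ereal ((if t < dpar x y then 2 * dpar x y + 1 - 2*t else 1) / Opt x y t) \<le> CR x y f"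
  proof (cases "t < d")
    case False
    thus ?thesis using CR_lower[OF t delivery_ge1] by (simp add: d_def)
  next
    case tlt: True
    define E where "E = DD x y t + 1 - t"
    have E1: "E > 1" using F2[OF tlt] by (simp add: E_def)
    have "Opt x y t = max 1 E" by (simp add: Opt_def E_def DD_def)
    hence OptE: "Opt x y t = E" using E1 by simp
    have Opt0: "Opt x y 0 = 1 + DD x y 0" by (simp add: Opt_def DD_def)
    have r0nn: "DD x y 0 \<ge> 0" by (rule DD_nonneg)
    have tmeet: "f s = (t,0) \<and> s \<ge> DD x y t" if s: "0 \<le> s" "f s = pkg t s" for s
    proof -
      have "\<not> s < t"
      proof
        assume st: "s < t"
        hence fs: "f s = (s,0)" using s by (simp add: pkg_def)
        have "DD x y s \<le> s" using adm_meet[OF adm s(1) fs] .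
        hence "d \<le> s" by (rule F1)
        thus False using st tlt by simp
      qed
      hence fs: "f s = (t,0)" using s by (simp add: pkg_def)
      thus ?thesis using adm_meet[OF adm s(1) fs] by simp
    qed
    have onemeet: "f s1 = (min s1 1, 0) \<and> d \<le> min s1 1 \<and> min s1 1 \<le> s1" if s1: "0 \<le> s1" "f s1 = pkg 1 s1" for s1
    proof -
      have fs1: "f s1 = (min s1 1, 0)" using s1 by (simp add: pkg_def)
      have "d \<le> min s1 1"
      proof (cases "s1 < 1")
        case True
        hence "f s1 = (s1, 0)" using fs1 by simp
        hence "DD x y s1 \<le> s1" using adm_meet[OF adm s1(1)] by simp
        thus ?thesis using F1 True by simp
      next
        case False thus ?thesis using d by simp
      qed
      thus ?thesis using fs1 by simp
    qed
    show ?thesis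
    proof (cases "\<exists>s. 0 \<le> s \<and> f s = pkg t s \<and> (\<forall>s1. 0 \<le> s1 \<longrightarrow> f s1 = pkg 1 s1 \<longrightarrow> s \<le> s1)")
      case True
      then obtain s where s: "0 \<le> s" "f s = pkg t s" and sfirst: "\<forall>s1. 0 \<le> s1 \<longrightarrow> f s1 = pkg 1 s1 \<longrightarrow> s \<le> s1"
        by blast
      have fs: "f s = (t,0)" and sD: "s \<ge> DD x y t" using tmeet[OF s] by auto
      have sgt: "s > t" using sD F2[OF tlt] by simp
      have del: "ereal (E + 2) \<le> delivery f 0"
      proof (rule delivery_lower)
        fix s0 assume s0: "0 \<le> s0" "f s0 = pkg 0 s0"
        hence fs0: "f s0 = (0,0)" by (simp add: pkg_def)
        obtain s1 where s1: "0 \<le> s1" "f s1 = pkg 1 s1" "s1 < s0" using C2 s0(1) fs0 by blast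
        have fs1: "f s1 = (min s1 1, 0)" using onemeet[OF s1(1,2)] by simp
        have ss1: "s \<le> s1" using sfirst s1 by auto
        have a: "\<bar>min s1 1 - t\<bar> \<le> \<bar>s1 - s\<bar>" using adm_two[OF adm s1(1) s(1) fs1 fs] .
        have s11: "s1 \<ge> 1"
        proof (rule ccontr)
          assume "\<not> s1 \<ge> 1"
          hence "min s1 1 = s1" by simp
          thus False using a ss1 sgt by simp
        qed
        hence fs1': "f s1 = (1,0)" using fs1 by simp
        have b: "\<bar>0 - 1\<bar> \<le> \<bar>s0 - s1\<bar>" using adm_two[OF adm s0(1) s1(1) fs0 fs1'] .
        show "E + 2 \<le> s0 + dist (f s0) T_pt" using a b ss1 s1 s11 sD t fs0
          by (simp add: T_pt_def dist_ax E_def)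
      qed
      have c: "ereal ((E + 2) / Opt x y 0) \<le> CR x y f" using CR_lower[OF _ _ del] by simp
      have Epos: "E > 0" using E1 by linarith
      have "(2 * d + 1 - 2*t) * (1 + DD x y 0) \<le> E * (E + 2)"
        using I2[OF y t(1) tlt[unfolded d_def] xpos inside] by (simp add: E_def d_def algebra_simps)
      hence "(2 * d + 1 - 2*t) / E \<le> (E + 2) / (1 + DD x y 0)"
        using Epos r0nn by (simp add: divide_simps mult.commute)
      thus ?thesis using c OptE Opt0 tlt by (simp add: d_def[symmetric]) (metis ereal_less_eq(3) order_trans)
    next
      case False
      have del: "ereal (2 * d + 1 - 2*t) \<le> delivery f t"
      proof (rule delivery_lower)
        fix s assume s: "0 \<le> s" "f s = pkg t s"
        have fs: "f s = (t,0)" using tmeet[OF s] by auto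
        obtain s1 where s1: "0 \<le> s1" "f s1 = pkg 1 s1" "s1 < s" using False s by force
        have om: "f s1 = (min s1 1, 0)" "d \<le> min s1 1" "min s1 1 \<le> s1" using onemeet[OF s1(1,2)] by auto
        have a: "\<bar>t - min s1 1\<bar> \<le> \<bar>s - s1\<bar>" using adm_two[OF adm s(1) s1(1) fs om(1)] .
        define q where "q = min s1 1"
        have q: "d \<le> q" "q \<le> s1" "\<bar>t - q\<bar> \<le> \<bar>s - s1\<bar>" using om a by (auto simp: q_def)
        have "2 * d - t \<le> s" using q s1 tlt by linarith
        thus "2 * d + 1 - 2*t \<le> s + dist (f s) T_pt" using t fs
          by (simp add: T_pt_def dist_ax)
      qed
      show ?thesis using CR_lower[OF t del] tlt by (simp add: d_def)
    qed
  qed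
qed


theorem theorem4:
  fixes x y :: real and f :: "real \<Rightarrow> real \<times> real"
  assumes "(x, y) \<noteq> (0, 0)" and "0 \<le> y" and "admissible x y f"
  shows "CR x y (hybrid x y) \<le> CR x y f"
proof -
  have nz: "(x,y) \<noteq> (0,0)" and y: "y \<ge> 0" and adm: "admissible x y f" using assms by auto
  show ?thesis
  proof (cases "\<exists>s0. 0 \<le> s0 \<and> f s0 = (0,0) \<and> (\<forall>s1. 0 \<le> s1 \<longrightarrow> f s1 = pkg 1 s1 \<longrightarrow> s0 \<le> s1)")
    case True
    then obtain s0 where "0 \<le> s0" "f s0 = (0,0)" "\<forall>s1. 0 \<le> s1 \<longrightarrow> f s1 = pkg 1 s1 \<longrightarrow> s0 \<le> s1" by blast
    hence c0: "CR x y (alg0 x y) \<le> CR x y f" using case1[OF adm nz] by blast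
    show ?thesis unfolding hybrid_def using c0 by (auto intro: order_trans)
  next
    case False
    hence C2: "\<forall>s0. 0 \<le> s0 \<longrightarrow> f s0 = (0,0) \<longrightarrow> (\<exists>s1. 0 \<le> s1 \<and> f s1 = pkg 1 s1 \<and> s1 < s0)"
      by (auto simp: not_le)
    show ?thesis
    proof (cases "(x - 1)\<^sup>2 + y\<^sup>2 > 1")
      case True
      have "DD x y 1 > 1" using True by (simp add: DD_def)
      hence c1: "CR x y (alg1 x y) \<le> CR x y f" using case2_out[OF adm y _ C2] by blast
      show ?thesis unfolding hybrid_def using True c1 by (auto intro: order_trans)
    next
      case False
      hence inside: "(x-1)^2+y^2 \<le> 1" by simp
      have xpos: "x > 0"
      proof (rule ccontr)
        assume "\<not> x > 0"
        hence "x \<le> 0" by simp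
        have "(x-1)^2 = 1 - 2*x + x^2" by (simp add: power2_eq_square algebra_simps)
        hence "x^2 + y^2 \<le> 2*x" using inside by linarith
        moreover have "x^2 \<ge> 0" "y^2 \<ge> 0" by auto
        ultimately have "x^2 = 0" "y^2 = 0" using \<open>x \<le> 0\<close> by linarith+
        thus False using nz by simp
      qed
      have cd: "CR x y (algd x y) \<le> CR x y f" using case2_in[OF adm y xpos inside C2] .
      show ?thesis unfolding hybrid_def using False cd by (auto intro: order_trans)
    qed
  qed
qed

end
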